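(* For every Pólya frequency power series $f(t)=\sum_{k\ge1}f_kt^k$ with $f_1\neq0$, there exists a constant $\alpha>0$ such that the quasi-Riordan array $\left[\frac1{1-\alpha t},f(t)\right]$ is not totally positive, although both $\frac1{1-\alpha t}$ and $f(t)$ are Pólya frequency power series.
   Context: For formal power series $g(t)=\sum_{n\ge0}g_nt^n$ with $g_0=1$ and $f(t)=\sum_{n\ge1}f_nt^n$ with $f_1\ne0$, the quasi-Riordan array $[g,f]$ is the infinite lower triangular matrix $(r_{n,k})_{n,k\ge0}$ with $r_{n,0}=g_n$ and $r_{n,k}=f_{n-k+1}$ for $k\ge1$ (with $f_j=0$ for $j\le0$), i.e. its columns have generating functions $g,f,tf,t^2f,\dots$. An infinite matrix is totally positive (TP) if all its minors are nonnegative. A sequence $(a_n)_{n\ge0}$ of nonnegative reals is a Pólya frequency sequence if its Toeplitz matrix $[a_{i-j}]_{i,j\ge0}$ (with $a_m=0$ for $m<0$) is TP; a formal power series is a Pólya frequency power series if its coefficient sequence is a Pólya frequency sequence. *)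

theory Defs
  imports "HOL-Computational_Algebra.Formal_Power_Series" "Jordan_Normal_Form.Determinant"
begin

definition totally_positive :: "(nat \<Rightarrow> nat \<Rightarrow> real) \<Rightarrow> bool" where
  "totally_positive A \<longleftrightarrow>
     (\<forall>k r c. strict_mono_on {..<k} r \<and> strict_mono_on {..<k} c \<longrightarrow>
        det (mat k k (\<lambda>(i, j). A (r i) (c j))) \<ge> 0)"

definition toeplitz :: "(nat \<Rightarrow> real) \<Rightarrow> nat \<Rightarrow> nat \<Rightarrow> real" where
  "toeplitz a i j = (if j \<le> i then a (i - j) else 0)"

definition polya_frequency_seq :: "(nat \<Rightarrow> real) \<Rightarrow> bool" where
  "polya_frequency_seq a \<longleftrightarrow> (\<forall>n. a n \<ge> 0) \<and> totally_positive (toeplitz a)"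

definition polya_frequency_fps :: "real fps \<Rightarrow> bool" where
  "polya_frequency_fps f \<longleftrightarrow> polya_frequency_seq (fps_nth f)"

text \<open>Quasi-Riordan array [g, f]: column 0 is g, column k>=1 is t^(k-1) f.\<close>
definition quasi_riordan :: "real fps \<Rightarrow> real fps \<Rightarrow> nat \<Rightarrow> nat \<Rightarrow> real" where
  "quasi_riordan g f n k =
     (if k = 0 then fps_nth g n
      else if k \<le> n + 1 then fps_nth f (n + 1 - k) else 0)"

end

theory Submission
  imports Defs
begin

lemma geom_inv: "fps_nth (inverse (1 - fps_const (a::real) * fps_X)) n = a ^ n"
proof -
  have "(1 - fps_const a * fps_X) * Abs_fps (\<lambda>n. a ^ n) = 1"
  proof (rule fps_ext)
    fix n
    show "fps_nth ((1 - fps_const a * fps_X) * Abs_fps (\<lambda>n. a ^ n)) n = fps_nth (1::real fps) n"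
      by (cases n) (simp_all add: algebra_simps mult.assoc fps_X_mult_nth)
  qed
  then have "inverse (1 - fps_const a * fps_X) = Abs_fps (\<lambda>n. a ^ n)"
    by (rule fps_inverse_unique)
  then show ?thesis by simp
qed

lemma det_scale:
  fixes B :: "nat \<Rightarrow> nat \<Rightarrow> real"
  shows "det (mat n n (\<lambda>(i,j). x i * y j * B i j)) =
     (\<Prod>i<n. x i) * (\<Prod>j<n. y j) * det (mat n n (\<lambda>(i,j). B i j))"
proof -
  have A: "mat n n (\<lambda>(i,j). x i * y j * B i j) \<in> carrier_mat n n" by simp
  have B: "mat n n (\<lambda>(i,j). B i j) \<in> carrier_mat n n" by simp
  have "det (mat n n (\<lambda>(i,j). x i * y j * B i j)) =
     (\<Sum>p\<in>{p. p permutes {0..<n}}. signof p * (\<Prod>i=0..<n. x i * y (p i) * B i (p i)))"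
    unfolding det_def'[OF A] by (intro sum.cong refl prod.cong) (auto simp: permutes_def)
  also have "\<dots> = (\<Sum>p\<in>{p. p permutes {0..<n}}. (\<Prod>i<n. x i) * (\<Prod>j<n. y j) * (signof p * (\<Prod>i=0..<n. B i (p i))))"
  proof (intro sum.cong refl)
    fix p assume p: "p \<in> {p. p permutes {0..<n}}"
    have "(\<Prod>i=0..<n. y (p i)) = (\<Prod>i=0..<n. y i)"
      using prod.permute[OF p[simplified], of y] by (simp add: comp_def)
    then show "signof p * (\<Prod>i=0..<n. x i * y (p i) * B i (p i)) = (\<Prod>i<n. x i) * (\<Prod>j<n. y j) * (signof p * (\<Prod>i=0..<n. B i (p i)))"
      by (simp add: prod.distrib atLeast0LessThan)
  qed
  also have "\<dots> = (\<Prod>i<n. x i) * (\<Prod>j<n. y j) * det (mat n n (\<lambda>(i,j). B i j))"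
    unfolding det_def'[OF B] sum_distrib_left
    by (intro sum.cong refl arg_cong2[where f="(*)"] prod.cong) (auto simp: permutes_def)
  finally show ?thesis .
qed

lemma staircase:
  "\<forall>r c. strict_mono_on {..<k} r \<and> strict_mono_on {..<k} (c::nat\<Rightarrow>nat) \<longrightarrow>
     det (mat k k (\<lambda>(i,j). if c j \<le> r i then 1 else (0::real))) \<ge> 0"
proof (induction k)
  case 0 then show ?case by simp
next
  case (Suc n)
  show ?case
  proof (intro allI impI, elim conjE)
    fix r c :: "nat \<Rightarrow> nat"
    assume r: "strict_mono_on {..<Suc n} r" and c: "strict_mono_on {..<Suc n} c"
    define B where "B = mat (Suc n) (Suc n) (\<lambda>(i,j). if c j \<le> r i then 1 else (0::real))"
    have Bc: "B \<in> carrier_mat (Suc n) (Suc n)" by (simp add: B_def)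
    show "det B \<ge> 0"
    proof (cases "n \<ge> 1 \<and> c 1 \<le> r 0")
      case True
      have "col B 0 = col B 1"
      proof (rule eq_vecI)
        fix i assume "i < dim_vec (col B 1)"
        then have i: "i < Suc n" by (simp add: B_def)
        have "c 0 < c 1" using c True by (auto simp: strict_mono_on_def)
        moreover have "r 0 \<le> r i" using r i by (cases "i = 0") (auto simp: strict_mono_on_def intro: less_imp_le)
        ultimately show "col B 0 $ i = col B 1 $ i" using True i by (auto simp: B_def)
      qed (simp add: B_def)
      then have "det B = 0" using True by (intro det_identical_columns[OF Bc, of 0 1]) auto
      then show ?thesis by simp
    next
      case False
      have "det B = (\<Sum>j<Suc n. B $$ (0,j) * cofactor B 0 j)"
        by (rule laplace_expansion_row[OF Bc]) simp
      also have "\<dots> = B $$ (0,0) * cofactor B 0 0"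
      proof -
        have "(\<Sum>j<n. B $$ (0, Suc j) * cofactor B 0 (Suc j)) = 0"
        proof (rule sum.neutral, rule ballI)
          fix j assume j: "j \<in> {..<n}"
          have "c 1 \<le> c (Suc j)" using c j
            by (cases "j = 0") (auto simp: strict_mono_on_def intro: less_imp_le)
          then have "B $$ (0, Suc j) = 0" using False j by (auto simp: B_def)
          then show "B $$ (0, Suc j) * cofactor B 0 (Suc j) = 0" by simp
        qed
        then show ?thesis by (simp only: sum.lessThan_Suc_shift)
      qed
      also have "\<dots> = B $$ (0,0) * det (mat n n (\<lambda>(i,j). if c (Suc j) \<le> r (Suc i) then 1 else (0::real)))"
      proof -
        have "mat_delete B 0 0 = mat n n (\<lambda>(i,j). if c (Suc j) \<le> r (Suc i) then 1 else (0::real))"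
          by (rule eq_matI) (auto simp: mat_delete_def B_def)
        then show ?thesis by (simp add: cofactor_def)
      qed
      also have "\<dots> \<ge> 0"
      proof (rule mult_nonneg_nonneg)
        show "B $$ (0,0) \<ge> 0" by (simp add: B_def)
        have "strict_mono_on {..<n} (r \<circ> Suc)" "strict_mono_on {..<n} (c \<circ> Suc)"
          using r c by (auto simp: strict_mono_on_def)
        then show "det (mat n n (\<lambda>(i,j). if c (Suc j) \<le> r (Suc i) then 1 else (0::real))) \<ge> 0"
          using Suc.IH[rule_format, of "r \<circ> Suc" "c \<circ> Suc"] by simp
      qed
      finally show ?thesis .
    qed
  qed
qed

lemma det2: "det (mat 2 2 g) = g (0,0) * g (1,1) - g (0,1) * (g (1,0) :: real)"
proof -
  have C: "mat 2 2 g \<in> carrier_mat 2 2" by simp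
  have d1: "\<And>A :: real mat. A \<in> carrier_mat 1 1 \<Longrightarrow> det A = A $$ (0,0)" by (rule det_single)
  have "det (mat 2 2 g) = (\<Sum>j<2. mat 2 2 g $$ (0,j) * cofactor (mat 2 2 g) 0 j)"
    by (rule laplace_expansion_row[OF C]) simp
  also have "\<dots> = g (0,0) * g (1,1) - g (0,1) * g (1,0)"
    by (simp add: numeral_2_eq_2 cofactor_def d1 mat_delete_carrier mat_delete_def)
  finally show ?thesis .
qed

lemma geom_pf:
  assumes a: "(a::real) > 0"
  shows "polya_frequency_fps (inverse (1 - fps_const a * fps_X))"
  unfolding polya_frequency_fps_def polya_frequency_seq_def geom_inv totally_positive_def
proof (intro conjI allI impI, goal_cases)
  case (1 n) then show ?case using a by simp
next
  case (2 k r c)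
  have eq: "mat k k (\<lambda>(i,j). toeplitz (\<lambda>n. a ^ n) (r i) (c j)) =
    mat k k (\<lambda>(i,j). a ^ r i * inverse a ^ c j * (if c j \<le> r i then 1 else 0))"
    using a by (intro eq_matI) (auto simp: toeplitz_def power_diff power_inverse divide_inverse)
  have "det (mat k k (\<lambda>(i,j). if c j \<le> r i then 1 else (0::real))) \<ge> 0"
    using staircase 2 by blast
  then show ?case unfolding eq det_scale using a
    by (intro mult_nonneg_nonneg prod_nonneg) auto
qed

theorem corollary4p3:
  fixes f :: "real fps"
  assumes "fps_nth f 0 = 0" and "fps_nth f 1 \<noteq> 0" and "polya_frequency_fps f"
  shows "\<exists>\<alpha>::real. \<alpha> > 0 \<and>
           \<not> totally_positive (quasi_riordan (inverse (1 - fps_const \<alpha> * fps_X)) f) \<and>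
           polya_frequency_fps (inverse (1 - fps_const \<alpha> * fps_X)) \<and>
           polya_frequency_fps f"
proof -
  have nn: "\<And>n. fps_nth f n \<ge> 0" using assms(3)
    by (simp add: polya_frequency_fps_def polya_frequency_seq_def)
  have f1: "fps_nth f 1 > 0" using nn[of 1] assms(2) by linarith
  define a where "a = fps_nth f 2 / fps_nth f 1 + 1"
  have "fps_nth f 2 / fps_nth f 1 \<ge> 0" using nn[of 2] f1 by simp
  then have a: "a > 0" by (simp add: a_def)
  let ?Q = "quasi_riordan (inverse (1 - fps_const a * fps_X)) f"
  have "det (mat 2 2 (\<lambda>(i,j). ?Q (Suc i) j)) = a * fps_nth f 2 - a^2 * fps_nth f 1"
    unfolding det2 by (simp add: quasi_riordan_def geom_inv power2_eq_square numeral_2_eq_2)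
  also have "\<dots> = - a * fps_nth f 1"
    using f1 by (simp add: a_def field_simps power2_eq_square)
  also have "\<dots> < 0" using a f1 by simp
  finally have neg: "det (mat 2 2 (\<lambda>(i,j). ?Q (Suc i) j)) < 0" .
  have "\<not> totally_positive ?Q"
    unfolding totally_positive_def
  proof
    assume "\<forall>k r c. strict_mono_on {..<k} r \<and> strict_mono_on {..<k} c \<longrightarrow>
        det (mat k k (\<lambda>(i, j). ?Q (r i) (c j))) \<ge> 0"
    then have "det (mat 2 2 (\<lambda>(i, j). ?Q (Suc i) (id j))) \<ge> 0"
      by (auto simp: strict_mono_on_def)
    with neg show False by simp
  qed
  then show ?thesis using a geom_pf[OF a] assms(3) by blast
qed

end
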